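(* Let $(X,T)$ be a topological dynamical system and $d\in\mathbb{N}$. (1) For every $n\in\mathbb{N}$, ${\bf P}(X,T)={\bf P}(X,T^n)$. (2) If ${\bf P}(X,T)$ is closed, then ${\bf P}(N_d(X),\mathcal{G}_d(T))=\{((x_i)_{i=1}^d,(y_i)_{i=1}^d)\in N_d(X)\times N_d(X):(x_i,y_i)\in{\bf P}(X,T)\text{ for }i=1,\dots,d\}$.
   Context: For a system $(Z,G)$, ${\bf P}(Z,G)=\{(x,y):\inf_{g\in G}\rho(gx,gy)=0\}$ (for $(X,S)$, $G=\{S^k:k\in\mathbb{Z}\}$). $N_d(X)=\overline{\{(T^{p+q}x,\dots,T^{p+dq}x):x\in X,p,q\in\mathbb{Z}\}}$, $\mathcal{G}_d(T)=\langle T\times\cdots\times T,\ T\times T^2\times\cdots\times T^d\rangle$. *)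

theory Defs
  imports "HOL-Analysis.Analysis"
begin

definition ipow :: "'a set \<Rightarrow> ('a \<Rightarrow> 'a) \<Rightarrow> int \<Rightarrow> 'a \<Rightarrow> 'a" where
  "ipow X T k = (if 0 \<le> k then T ^^ nat k else (the_inv_into X T) ^^ nat (- k))"

definition proximal_rel ::
    "('b \<Rightarrow> 'b \<Rightarrow> real) \<Rightarrow> 'b set \<Rightarrow> ('b \<Rightarrow> 'b) set \<Rightarrow> ('b \<times> 'b) set" where
  "proximal_rel rho Z G = {(x, y). x \<in> Z \<and> y \<in> Z \<and> (INF g\<in>G. rho (g x) (g y)) = 0}"

definition pow_group :: "'a set \<Rightarrow> ('a \<Rightarrow> 'a) \<Rightarrow> ('a \<Rightarrow> 'a) set" where
  "pow_group X T = {ipow X T k | k. True}"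

definition Prox :: "('a::metric_space) set \<Rightarrow> ('a \<Rightarrow> 'a) \<Rightarrow> ('a \<times> 'a) set" where
  "Prox X T = proximal_rel dist X (pow_group X T)"

text \<open>Points of X^d are represented by functions nat => 'a, extensional outside {1..d};
  the metric on X^d is the max metric.\<close>
definition dist_d :: "nat \<Rightarrow> (nat \<Rightarrow> 'a::metric_space) \<Rightarrow> (nat \<Rightarrow> 'a) \<Rightarrow> real" where
  "dist_d d u v = Max ((\<lambda>i. dist (u i) (v i)) ` {1..d})"

definition restr_d :: "nat \<Rightarrow> (nat \<Rightarrow> 'a) \<Rightarrow> nat \<Rightarrow> 'a" where
  "restr_d d f = (\<lambda>i. if i \<in> {1..d} then f i else undefined)"

definition Nd :: "nat \<Rightarrow> ('a::metric_space) set \<Rightarrow> ('a \<Rightarrow> 'a) \<Rightarrow> (nat \<Rightarrow> 'a) set" where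
  "Nd d X T = closure {restr_d d (\<lambda>i. ipow X T (p + int i * q) x) | x p q. x \<in> X}"

text \<open>G_d(T) = <T x ... x T, T x T^2 x ... x T^d>; since the generators commute its elements are
  exactly T^(a+b) x T^(a+2b) x ... x T^(a+db), a b in Z.\<close>
definition Gd :: "nat \<Rightarrow> 'a set \<Rightarrow> ('a \<Rightarrow> 'a) \<Rightarrow> ((nat \<Rightarrow> 'a) \<Rightarrow> (nat \<Rightarrow> 'a)) set" where
  "Gd d X T = {(\<lambda>u. restr_d d (\<lambda>i. ipow X T (a + int i * b) (u i))) | a b. True}"

end

theory Submission
  imports Defs
begin

lemma funpow_in: "(\<And>x. x \<in> X \<Longrightarrow> f x \<in> X) \<Longrightarrow> x \<in> X \<Longrightarrow> (f ^^ n) x \<in> X"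
  by (induction n) auto

lemma inv_in: "S ` X = X \<Longrightarrow> inj_on S X \<Longrightarrow> x \<in> X \<Longrightarrow> the_inv_into X S x \<in> X"
  by (metis order_refl the_inv_into_into)

lemma ipow_in: assumes "S ` X = X" "inj_on S X" "x \<in> X" shows "ipow X S k x \<in> X"
proof -
  have "\<And>x. x \<in> X \<Longrightarrow> S x \<in> X" using assms(1) by blast
  moreover have "\<And>x. x \<in> X \<Longrightarrow> the_inv_into X S x \<in> X" using inv_in assms by metis
  ultimately show ?thesis unfolding ipow_def using funpow_in[of X] assms(3) by auto
qed

lemma ipow_succ: assumes "S ` X = X" "inj_on S X" "x \<in> X" shows "ipow X S (k+1) x = S (ipow X S k x)"
proof -
  have fi: "\<And>y. y \<in> X \<Longrightarrow> S (the_inv_into X S y) = y" using assms(1,2) by (metis f_the_inv_into_f)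
  consider "k \<ge> 0" | "k = -1" | "k \<le> -2" by linarith
  then show ?thesis
  proof cases
    case 1
    then have "nat (k+1) = Suc (nat k)" by simp
    then show ?thesis using 1 unfolding ipow_def by simp
  next
    case 2
    then show ?thesis unfolding ipow_def using fi assms(3) by simp
  next
    case 3
    then have "nat (-k) = Suc (nat (-(k+1)))" by simp
    moreover have "((the_inv_into X S) ^^ nat (-(k+1))) x \<in> X"
      using funpow_in[of X "the_inv_into X S"] inv_in assms by metis
    ultimately show ?thesis using 3 fi unfolding ipow_def by simp
  qed
qed

lemma ipow_pred: assumes "S ` X = X" "inj_on S X" "x \<in> X" shows "ipow X S (k-1) x = the_inv_into X S (ipow X S k x)"
proof -
  have "ipow X S k x = S (ipow X S (k-1) x)" using ipow_succ[OF assms, of "k-1"] by simp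
  then show ?thesis using the_inv_into_f_f[OF assms(2) ipow_in[OF assms]] by simp
qed

lemma ipow_zero: "ipow X S 0 x = x" by (simp add: ipow_def)

lemma ipow_nat: "ipow X S (int n) = S ^^ n" by (simp add: ipow_def)

lemma ipow_add: assumes "S ` X = X" "inj_on S X" "x \<in> X" shows "ipow X S (j+k) x = ipow X S j (ipow X S k x)"
proof (induction j rule: int_induct[where k=0])
  case base then show ?case by (simp add: ipow_zero)
next
  case (step1 i)
  have "ipow X S (i + 1 + k) x = S (ipow X S (i+k) x)"
    using ipow_succ[OF assms, of "i+k"] by (simp add: algebra_simps)
  also have "\<dots> = ipow X S (i+1) (ipow X S k x)"
    using step1 ipow_succ[OF assms(1,2) ipow_in[OF assms]] by simp
  finally show ?case .
next
  case (step2 i)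
  have "ipow X S (i - 1 + k) x = the_inv_into X S (ipow X S (i+k) x)"
    using ipow_pred[OF assms, of "i+k"] by (simp add: algebra_simps)
  also have "\<dots> = ipow X S (i-1) (ipow X S k x)"
    using step2 ipow_pred[OF assms(1,2) ipow_in[OF assms]] by simp
  finally show ?case .
qed

lemma funpow_cont: "continuous_on X f \<Longrightarrow> (\<And>x. x \<in> X \<Longrightarrow> f x \<in> X) \<Longrightarrow> continuous_on X (f ^^ n)"
proof (induction n)
  case 0 then show ?case by (simp add: continuous_on_id)
next
  case (Suc n)
  have "continuous_on X (\<lambda>x. f ((f^^n) x))"
  proof (rule continuous_on_compose2[OF Suc.prems(1) Suc.IH[OF Suc.prems]])
    show "(f ^^ n) ` X \<subseteq> X" using funpow_in[of X f] Suc.prems(2) by blast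
  qed
  then show ?case by (simp add: comp_def)
qed

lemma ipow_cont: fixes X :: "'a::metric_space set" assumes "compact X" "continuous_on X S" "S ` X = X" "inj_on S X"
  shows "continuous_on X (ipow X S k)"
proof -
  have c: "continuous_on X (the_inv_into X S)"
    using continuous_on_inv[OF assms(2,1), of "the_inv_into X S"] assms(3,4) the_inv_into_f_f by fastforce
  show ?thesis unfolding ipow_def
  proof -
    have "\<And>x. x \<in> X \<Longrightarrow> S x \<in> X" using assms(3) by blast
    then show "continuous_on X (if 0 \<le> k then S ^^ nat k else the_inv_into X S ^^ nat (- k))"
      using funpow_cont[OF assms(2)] funpow_cont[OF c] inv_in[OF assms(3,4)] by auto
  qed
qed


lemma inf0: fixes f :: "'b \<Rightarrow> real"
  assumes "A \<noteq> {}" "\<And>a. a \<in> A \<Longrightarrow> f a \<ge> 0"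
  shows "(INF a\<in>A. f a) = 0 \<longleftrightarrow> (\<forall>e>0. \<exists>a\<in>A. f a < e)"
proof -
  have bdd: "bdd_below (f ` A)" using assms(2) by (intro bdd_belowI2[where m=0]) auto
  have ge: "(INF a\<in>A. f a) \<ge> 0" using assms by (intro cINF_greatest) auto
  show ?thesis
  proof
    assume "(INF a\<in>A. f a) = 0"
    then show "\<forall>e>0. \<exists>a\<in>A. f a < e" using cINF_less_iff[OF assms(1) bdd] by auto
  next
    assume H: "\<forall>e>0. \<exists>a\<in>A. f a < e"
    have "\<not> (INF a\<in>A. f a) > 0"
    proof
      assume p: "(INF a\<in>A. f a) > 0"
      then obtain a where "a \<in> A" "f a < (INF a\<in>A. f a)" using H by blast
      then show False using cINF_lower[OF bdd, of a] by linarith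
    qed
    then show "(INF a\<in>A. f a) = 0" using ge by linarith
  qed
qed

definition proxc :: "'a::metric_space set \<Rightarrow> ('a \<Rightarrow> 'a) \<Rightarrow> 'a \<Rightarrow> 'a \<Rightarrow> bool" where
  "proxc X S x y \<longleftrightarrow> x \<in> X \<and> y \<in> X \<and> (\<forall>e>0. \<exists>k. dist (ipow X S k x) (ipow X S k y) < e)"

lemma Prox_char: "(x, y) \<in> Prox X S \<longleftrightarrow> proxc X S x y"
proof -
  have ne: "pow_group X S \<noteq> {}" unfolding pow_group_def by auto
  have "(INF g\<in>pow_group X S. dist (g x) (g y)) = 0 \<longleftrightarrow> (\<forall>e>0. \<exists>g\<in>pow_group X S. dist (g x) (g y) < e)"
    by (rule inf0[OF ne]) auto
  also have "\<dots> \<longleftrightarrow> (\<forall>e>0. \<exists>k. dist (ipow X S k x) (ipow X S k y) < e)"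
    unfolding pow_group_def by blast
  finally show ?thesis unfolding Prox_def proximal_rel_def proxc_def by auto
qed

lemma prox_inv: assumes "S ` X = X" "inj_on S X" "proxc X S x y" shows "proxc X S (ipow X S a x) (ipow X S a y)"
proof -
  have xy: "x \<in> X" "y \<in> X" using assms(3) proxc_def by auto
  show ?thesis unfolding proxc_def
  proof (intro conjI allI impI)
    show "ipow X S a x \<in> X" "ipow X S a y \<in> X" using ipow_in assms(1,2) xy by auto
    fix e :: real assume "e > 0"
    then obtain k where "dist (ipow X S k x) (ipow X S k y) < e" using assms(3) unfolding proxc_def by blast
    then have "dist (ipow X S (k - a) (ipow X S a x)) (ipow X S (k - a) (ipow X S a y)) < e"
      using ipow_add[OF assms(1,2), of _ "k-a" a] xy by simp
    then show "\<exists>k. dist (ipow X S k (ipow X S a x)) (ipow X S k (ipow X S a y)) < e" by blast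
  qed
qed

lemma unif: assumes "compact X" "continuous_on X S" "S ` X = X" "inj_on S X" "e > 0"
  shows "\<exists>\<delta>>0. \<forall>s\<in>X. \<forall>t\<in>X. dist s t < \<delta> \<longrightarrow> dist (ipow X S m s) (ipow X S m t) < e"
proof -
  have "uniformly_continuous_on X (ipow X S m)"
    using compact_uniformly_continuous[OF ipow_cont[OF assms(1-4)] assms(1)] .
  then show ?thesis unfolding uniformly_continuous_on_def using assms(5) by (metis dist_commute)
qed

lemma unifN: assumes "compact X" "continuous_on X S" "S ` X = X" "inj_on S X" "e > 0"
  shows "\<exists>\<delta>>0. \<forall>s\<in>X. \<forall>t\<in>X. dist s t < \<delta> \<longrightarrow> (\<forall>j<N. dist (ipow X S (int j) s) (ipow X S (int j) t) < e)"
proof (induction N)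
  case 0 then show ?case by (auto intro: exI[of _ 1])
next
  case (Suc N)
  then obtain d1 where d1: "d1 > 0" "\<forall>s\<in>X. \<forall>t\<in>X. dist s t < d1 \<longrightarrow> (\<forall>j<N. dist (ipow X S (int j) s) (ipow X S (int j) t) < e)" by blast
  obtain d2 where d2: "d2 > 0" "\<forall>s\<in>X. \<forall>t\<in>X. dist s t < d2 \<longrightarrow> dist (ipow X S (int N) s) (ipow X S (int N) t) < e"
    using unif[OF assms] by blast
  show ?case
    apply (rule exI[of _ "min d1 d2"])
    using d1 d2 less_Suc_eq by auto
qed

lemma inj_funpow: "inj_on f A \<Longrightarrow> f ` A = A \<Longrightarrow> inj_on (f ^^ n) A"
  using bij_betw_funpow[of f A n] unfolding bij_betw_def by blast

lemma img_funpow: "f ` A = A \<Longrightarrow> (f ^^ n) ` A = A"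
proof (induction n)
  case 0 then show ?case by simp
next
  case (Suc n)
  have "(f ^^ Suc n) ` A = f ` ((f ^^ n) ` A)" by (simp add: image_comp)
  then show ?case using Suc by simp
qed


lemma ipow_pow: assumes "S ` X = X" "inj_on S X" "x \<in> X"
  shows "ipow X (S ^^ n) k x = ipow X S (int n * k) x"
proof (induction k rule: int_induct[where k=0])
  case base then show ?case by (simp add: ipow_zero)
next
  case (step1 i)
  have "ipow X (S ^^ n) (i + 1) x = (S ^^ n) (ipow X (S ^^ n) i x)"
    using ipow_succ[OF img_funpow[OF assms(1)] inj_funpow[OF assms(2,1)] assms(3)] by simp
  also have "\<dots> = ipow X S (int n) (ipow X S (int n * i) x)" using step1 by (simp add: ipow_nat)
  also have "\<dots> = ipow X S (int n * (i+1)) x" using ipow_add[OF assms, of "int n" "int n * i"]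
    by (simp add: algebra_simps)
  finally show ?case .
next
  case (step2 i)
  have "ipow X (S ^^ n) (i - 1) x = the_inv_into X (S ^^ n) (ipow X (S ^^ n) i x)"
    using ipow_pred[OF img_funpow[OF assms(1)] inj_funpow[OF assms(2,1)] assms(3)] by simp
  also have "ipow X (S ^^ n) i x = (S ^^ n) (ipow X S (int n * (i - 1)) x)"
    using step2 ipow_add[OF assms, of "int n" "int n * (i - 1)"] by (simp add: ipow_nat algebra_simps)
  also have "the_inv_into X (S ^^ n) \<dots> = ipow X S (int n * (i - 1)) x"
    using the_inv_into_f_f[OF inj_funpow[OF assms(2,1)] ipow_in[OF assms]] by blast
  finally show ?case .
qed

lemma part1: fixes X :: "'a::metric_space set"
  assumes "compact X" "continuous_on X T" "T ` X = X" "inj_on T X" "n \<ge> 1"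
  shows "Prox X T = Prox X (T ^^ n)"
proof (intro set_eqI)
  fix z :: "'a \<times> 'a"
  obtain x y where z: "z = (x, y)" by fastforce
  have "proxc X T x y \<longleftrightarrow> proxc X (T ^^ n) x y"
  proof
    assume H: "proxc X (T ^^ n) x y"
    then have xy: "x \<in> X" "y \<in> X" unfolding proxc_def by auto
    show "proxc X T x y" unfolding proxc_def
    proof (intro conjI xy allI impI)
      fix e :: real assume "e > 0"
      then obtain k where "dist (ipow X (T ^^ n) k x) (ipow X (T ^^ n) k y) < e" using H unfolding proxc_def by blast
      then show "\<exists>k. dist (ipow X T k x) (ipow X T k y) < e" using ipow_pow[OF assms(3,4)] xy by metis
    qed
  next
    assume H: "proxc X T x y"
    then have xy: "x \<in> X" "y \<in> X" unfolding proxc_def by auto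
    show "proxc X (T ^^ n) x y" unfolding proxc_def
    proof (intro conjI xy allI impI)
      fix e :: real assume "e > 0"
      obtain \<delta> where d: "\<delta> > 0" "\<forall>s\<in>X. \<forall>t\<in>X. dist s t < \<delta> \<longrightarrow> (\<forall>j<Suc n. dist (ipow X T (int j) s) (ipow X T (int j) t) < e)"
        using unifN[OF assms(1-4) \<open>e > 0\<close>] by blast
      obtain k where k: "dist (ipow X T k x) (ipow X T k y) < \<delta>" using H d(1) unfolding proxc_def by blast
      define m where "m = k div int n + 1"
      define j where "j = nat (int n * m - k)"
      have np: "int n > 0" using assms(5) by simp
      have dm: "int n * (k div int n) + k mod int n = k" "0 \<le> k mod int n" "k mod int n < int n"
        using np by (simp_all add: mult_div_mod_eq)
      have ii: "0 < int n * m - k" "int n * m - k \<le> int n" unfolding m_def distrib_left using dm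
        by linarith+
      have jn: "j < Suc n" "int j = int n * m - k" using ii unfolding j_def by simp_all
      have e1: "ipow X (T ^^ n) m x = ipow X T (int j) (ipow X T k x)" if "x \<in> X" for x
      proof -
        have "ipow X (T ^^ n) m x = ipow X T (int j + k) x" using ipow_pow[OF assms(3,4) that] jn(2) by simp
        then show ?thesis using ipow_add[OF assms(3,4) that] by simp
      qed
      show "\<exists>k. dist (ipow X (T ^^ n) k x) (ipow X (T ^^ n) k y) < e"
      proof (intro exI[of _ m])
        have "dist (ipow X T (int j) (ipow X T k x)) (ipow X T (int j) (ipow X T k y)) < e"
          using d(2) k jn(1) ipow_in[OF assms(3,4)] xy by blast
        then show "dist (ipow X (T ^^ n) m x) (ipow X (T ^^ n) m y) < e"
          using e1 xy by simp
      qed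
    qed
  qed
  then show "z \<in> Prox X T \<longleftrightarrow> z \<in> Prox X (T ^^ n)" using z Prox_char[of x y X T] Prox_char[of x y X "T^^n"] by simp
qed


lemma multi: fixes X :: "'a::metric_space set" and d :: nat
  assumes "compact X" "continuous_on X T" "T ` X = X" "inj_on T X" "closed (Prox X T)"
  shows "(\<forall>i\<in>{1..d}. proxc X T (U i) (V i)) \<Longrightarrow> e > 0 \<Longrightarrow>
     \<exists>a. \<forall>i\<in>{1..d}. dist (ipow X T a (U i)) (ipow X T a (V i)) < e"
proof (induction d arbitrary: e)
  case 0 then show ?case by simp
next
  case (Suc d)
  have inX: "U i \<in> X" "V i \<in> X" if "i \<in> {1..Suc d}" for i using Suc.prems(1) that unfolding proxc_def by auto
  have "\<forall>k. \<exists>a. \<forall>i\<in>{1..d}. dist (ipow X T a (U i)) (ipow X T a (V i)) < 1 / real (Suc k)"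
    using Suc.IH Suc.prems(1) by simp
  then obtain a where a: "\<And>k i. i \<in> {1..d} \<Longrightarrow> dist (ipow X T (a k) (U i)) (ipow X T (a k) (V i)) < 1 / real (Suc k)"
    by metis
  define x where "x = U (Suc d)"
  define y where "y = V (Suc d)"
  have xy: "x \<in> X" "y \<in> X" using inX[of "Suc d"] x_def y_def by auto
  have pxy: "proxc X T x y" using Suc.prems(1) x_def y_def by auto
  define f where "f k = (ipow X T (a k) x, ipow X T (a k) y)" for k
  have fX: "f k \<in> X \<times> X" for k using ipow_in[OF assms(3,4)] xy f_def by auto
  obtain l r where l: "l \<in> X \<times> X" "strict_mono r" "(f \<circ> r) \<longlonglongrightarrow> l"
    using compact_imp_seq_compact[OF compact_Times[OF assms(1) assms(1)]] fX unfolding seq_compact_def by metis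
  obtain p q where pq: "l = (p, q)" by fastforce
  have fP: "(f \<circ> r) k \<in> Prox X T" for k
    unfolding f_def comp_def using Prox_char prox_inv[OF assms(3,4) pxy] by blast
  have "(p, q) \<in> Prox X T" using closed_sequentially[OF assms(5) fP l(3)] pq by simp
  then have "proxc X T p q" using Prox_char[of p q X T] by blast
  then have pqX: "p \<in> X" "q \<in> X" unfolding proxc_def by auto
  have e3: "e / 3 > 0" using Suc.prems(2) by simp
  obtain m where m: "dist (ipow X T m p) (ipow X T m q) < e / 3"
    using \<open>proxc X T p q\<close> e3 unfolding proxc_def by blast
  obtain \<delta> where d: "\<delta> > 0" "\<forall>s\<in>X. \<forall>t\<in>X. dist s t < \<delta> \<longrightarrow> dist (ipow X T m s) (ipow X T m t) < e / 3"
    using unif[OF assms(1-4) e3] by blast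
  have c1: "(\<lambda>k. fst ((f \<circ> r) k)) \<longlonglongrightarrow> p" using tendsto_fst[OF l(3)] pq by simp
  have c2: "(\<lambda>k. snd ((f \<circ> r) k)) \<longlonglongrightarrow> q" using tendsto_snd[OF l(3)] pq by simp
  obtain K1 where K1: "\<And>k. k \<ge> K1 \<Longrightarrow> dist (fst ((f \<circ> r) k)) p < \<delta>"
    using c1 d(1) unfolding lim_sequentially by blast
  obtain K2 where K2: "\<And>k. k \<ge> K2 \<Longrightarrow> dist (snd ((f \<circ> r) k)) q < \<delta>"
    using c2 d(1) unfolding lim_sequentially by blast
  obtain K3 where K3: "inverse (real (Suc K3)) < \<delta>" using reals_Archimedean[OF d(1)] by blast
  define k where "k = r (max K1 (max K2 K3))"
  have kK3: "1 / real (Suc k) < \<delta>"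
  proof -
    have "K3 \<le> k" unfolding k_def using seq_suble[OF l(2), of "max K1 (max K2 K3)"] by linarith
    then have "1 / real (Suc k) \<le> inverse (real (Suc K3))" by (simp add: divide_simps)
    then show ?thesis using K3 by linarith
  qed
  have fk1: "dist (ipow X T (a k) x) p < \<delta>" using K1[of "max K1 (max K2 K3)"] unfolding k_def f_def by simp
  have fk2: "dist (ipow X T (a k) y) q < \<delta>" using K2[of "max K1 (max K2 K3)"] unfolding k_def f_def by simp
  show ?case
  proof (intro exI[of _ "m + a k"] ballI)
    fix i assume i: "i \<in> {1..Suc d}"
    have eq: "ipow X T (m + a k) (U i) = ipow X T m (ipow X T (a k) (U i))"
         "ipow X T (m + a k) (V i) = ipow X T m (ipow X T (a k) (V i))"
      using ipow_add[OF assms(3,4)] inX[OF i] by auto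
    have iX: "ipow X T (a k) (U i) \<in> X" "ipow X T (a k) (V i) \<in> X" using ipow_in[OF assms(3,4)] inX[OF i] by auto
    show "dist (ipow X T (m + a k) (U i)) (ipow X T (m + a k) (V i)) < e"
    proof (cases "i = Suc d")
      case True
      have ipX: "ipow X T (a k) x \<in> X" "ipow X T (a k) y \<in> X" using ipow_in[OF assms(3,4)] xy by auto
      have h1: "dist (ipow X T m (ipow X T (a k) x)) (ipow X T m p) < e / 3" using d(2) ipX pqX fk1 by blast
      have h2: "dist (ipow X T m (ipow X T (a k) y)) (ipow X T m q) < e / 3" using d(2) ipX pqX fk2 by blast
      have "dist (ipow X T m (ipow X T (a k) x)) (ipow X T m (ipow X T (a k) y))
          \<le> dist (ipow X T m (ipow X T (a k) x)) (ipow X T m p) + dist (ipow X T m p) (ipow X T m q)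
             + dist (ipow X T m q) (ipow X T m (ipow X T (a k) y))"
        using dist_triangle[of "ipow X T m (ipow X T (a k) x)" "ipow X T m (ipow X T (a k) y)" "ipow X T m p"]
          dist_triangle[of "ipow X T m p" "ipow X T m (ipow X T (a k) y)" "ipow X T m q"] by linarith
      moreover have "dist (ipow X T m q) (ipow X T m (ipow X T (a k) y)) < e / 3" using h2 by (simp add: dist_commute)
      ultimately have "dist (ipow X T m (ipow X T (a k) x)) (ipow X T m (ipow X T (a k) y)) < e"
        using h1 m by linarith
      then show ?thesis using eq True x_def y_def by simp
    next
      case False
      then have "i \<in> {1..d}" using i by auto
      then have "dist (ipow X T (a k) (U i)) (ipow X T (a k) (V i)) < \<delta>" using a[of i k] kK3 by linarith
      then have "dist (ipow X T m (ipow X T (a k) (U i))) (ipow X T m (ipow X T (a k) (V i))) < e / 3"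
        using d(2) iX by blast
      then show ?thesis using eq Suc.prems(2) by simp
    qed
  qed
qed


lemma dist_d_less: "d \<ge> 1 \<Longrightarrow> dist_d d u v < e \<longleftrightarrow> (\<forall>i\<in>{1..d}. dist (u i) (v i) < e)"
  unfolding dist_d_def by (subst Max_less_iff) auto

lemma dist_d_nonneg: "d \<ge> 1 \<Longrightarrow> dist_d d u v \<ge> 0"
  unfolding dist_d_def by (subst Max_ge_iff) (auto intro: bexI[of _ 1])

lemma Gd_char: assumes "d \<ge> 1"
  shows "proximal_rel (dist_d d) (Nd d X T) (Gd d X T) = {(u, v). u \<in> Nd d X T \<and> v \<in> Nd d X T \<and>
     (\<forall>e>0. \<exists>a b. \<forall>i\<in>{1..d}. dist (ipow X T (a + int i * b) (u i)) (ipow X T (a + int i * b) (v i)) < e)}"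
proof -
  have ne: "Gd d X T \<noteq> {}" unfolding Gd_def by auto
  have "(INF g\<in>Gd d X T. dist_d d (g u) (g v)) = 0 \<longleftrightarrow>
     (\<forall>e>0. \<exists>a b. \<forall>i\<in>{1..d}. dist (ipow X T (a + int i * b) (u i)) (ipow X T (a + int i * b) (v i)) < e)" for u v
  proof -
    have "(INF g\<in>Gd d X T. dist_d d (g u) (g v)) = 0 \<longleftrightarrow> (\<forall>e>0. \<exists>g\<in>Gd d X T. dist_d d (g u) (g v) < e)"
      by (rule inf0[OF ne]) (use dist_d_nonneg assms in auto)
    also have "\<dots> \<longleftrightarrow> (\<forall>e>0. \<exists>a b. dist_d d (restr_d d (\<lambda>i. ipow X T (a + int i * b) (u i))) (restr_d d (\<lambda>i. ipow X T (a + int i * b) (v i))) < e)"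
    proof (intro iffI allI impI)
      fix e :: real assume L: "\<forall>e>0. \<exists>g\<in>Gd d X T. dist_d d (g u) (g v) < e" and e: "e > 0"
      then obtain g where g: "g \<in> Gd d X T" "dist_d d (g u) (g v) < e" by blast
      from g(1) obtain a b where "g = (\<lambda>u. restr_d d (\<lambda>i. ipow X T (a + int i * b) (u i)))"
        unfolding Gd_def by blast
      then show "\<exists>a b. dist_d d (restr_d d (\<lambda>i. ipow X T (a + int i * b) (u i))) (restr_d d (\<lambda>i. ipow X T (a + int i * b) (v i))) < e"
        using g(2) by blast
    next
      fix e :: real assume L: "\<forall>e>0. \<exists>a b. dist_d d (restr_d d (\<lambda>i. ipow X T (a + int i * b) (u i))) (restr_d d (\<lambda>i. ipow X T (a + int i * b) (v i))) < e" and e: "e > 0"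
      then obtain a b where ab: "dist_d d (restr_d d (\<lambda>i. ipow X T (a + int i * b) (u i))) (restr_d d (\<lambda>i. ipow X T (a + int i * b) (v i))) < e" by blast
      have G: "(\<lambda>u. restr_d d (\<lambda>i. ipow X T (a + int i * b) (u i))) \<in> Gd d X T" unfolding Gd_def by blast
      show "\<exists>g\<in>Gd d X T. dist_d d (g u) (g v) < e" by (rule bexI[OF _ G]) (simp add: ab)
    qed
    also have "\<dots> \<longleftrightarrow> (\<forall>e>0. \<exists>a b. \<forall>i\<in>{1..d}. dist (ipow X T (a + int i * b) (u i)) (ipow X T (a + int i * b) (v i)) < e)"
      unfolding dist_d_less[OF assms] restr_d_def by auto
    finally show ?thesis .
  qed
  then show ?thesis unfolding proximal_rel_def by auto
qed

lemma Nd_in: fixes X :: "'a::metric_space set"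
  assumes "compact X" "T ` X = X" "inj_on T X" "u \<in> Nd d X T" "i \<in> {1..d}"
  shows "u i \<in> X"
proof -
  have "closed {f :: nat \<Rightarrow> 'a. f i \<in> X}"
    using closed_vimage[OF compact_imp_closed[OF assms(1)] continuous_on_product_coordinates[of i]]
    by (simp add: vimage_def)
  moreover have "{restr_d d (\<lambda>i. ipow X T (p + int i * q) x) | x p q. x \<in> X} \<subseteq> {f. f i \<in> X}"
    using assms(5) ipow_in[OF assms(2,3)] by (auto simp: restr_d_def)
  ultimately have "Nd d X T \<subseteq> {f. f i \<in> X}" unfolding Nd_def by (rule closure_minimal[rotated])
  then show ?thesis using assms(4) by blast
qed

theorem lemma4p1:
  fixes X :: "'a::metric_space set" and T :: "'a \<Rightarrow> 'a" and d :: nat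
  assumes "compact X" and "X \<noteq> {}"
    and "continuous_on X T" and "T ` X = X" and "inj_on T X"
    and "d \<ge> 1"
  shows "(\<forall>n::nat. n \<ge> 1 \<longrightarrow> Prox X T = Prox X (T ^^ n))
    \<and> (closed (Prox X T) \<longrightarrow>
         proximal_rel (dist_d d) (Nd d X T) (Gd d X T)
         = {(u, v). u \<in> Nd d X T \<and> v \<in> Nd d X T \<and> (\<forall>i\<in>{1..d}. (u i, v i) \<in> Prox X T)})"
proof (intro conjI allI impI)
  fix n :: nat assume "n \<ge> 1"
  then show "Prox X T = Prox X (T ^^ n)" using part1 assms by blast
next
  assume cl: "closed (Prox X T)"
  show "proximal_rel (dist_d d) (Nd d X T) (Gd d X T)
         = {(u, v). u \<in> Nd d X T \<and> v \<in> Nd d X T \<and> (\<forall>i\<in>{1..d}. (u i, v i) \<in> Prox X T)}"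
    unfolding Gd_char[OF assms(6)]
  proof (intro set_eqI iffI)
    fix z assume "z \<in> {(u, v). u \<in> Nd d X T \<and> v \<in> Nd d X T \<and>
     (\<forall>e>0. \<exists>a b. \<forall>i\<in>{1..d}. dist (ipow X T (a + int i * b) (u i)) (ipow X T (a + int i * b) (v i)) < e)}"
    then obtain u v where z: "z = (u, v)" "u \<in> Nd d X T" "v \<in> Nd d X T"
      and H: "\<forall>e>0. \<exists>a b. \<forall>i\<in>{1..d}. dist (ipow X T (a + int i * b) (u i)) (ipow X T (a + int i * b) (v i)) < e"
      by blast
    have PX: "proxc X T (u i) (v i)" if i: "i \<in> {1..d}" for i
      unfolding proxc_def
    proof (intro conjI allI impI)
      show "u i \<in> X" "v i \<in> X" using Nd_in[OF assms(1,4,5)] z i by auto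
      fix e :: real assume "e > 0"
      then obtain a b where "dist (ipow X T (a + int i * b) (u i)) (ipow X T (a + int i * b) (v i)) < e"
        using H i by blast
      then show "\<exists>k. dist (ipow X T k (u i)) (ipow X T k (v i)) < e" by blast
    qed
    show "z \<in> {(u, v). u \<in> Nd d X T \<and> v \<in> Nd d X T \<and> (\<forall>i\<in>{1..d}. (u i, v i) \<in> Prox X T)}"
    proof -
      have "\<forall>i\<in>{1..d}. (u i, v i) \<in> Prox X T"
      proof
        fix i assume "i \<in> {1..d}"
        then show "(u i, v i) \<in> Prox X T" using PX[of i] Prox_char[of "u i" "v i" X T] by simp
      qed
      then show ?thesis using z by blast
    qed
  next
    fix z assume "z \<in> {(u, v). u \<in> Nd d X T \<and> v \<in> Nd d X T \<and> (\<forall>i\<in>{1..d}. (u i, v i) \<in> Prox X T)}"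
    then obtain u v where z: "z = (u, v)" "u \<in> Nd d X T" "v \<in> Nd d X T"
      and H0: "\<forall>i\<in>{1..d}. (u i, v i) \<in> Prox X T" by blast
    have H: "\<forall>i\<in>{1..d}. proxc X T (u i) (v i)"
    proof
      fix i assume "i \<in> {1..d}"
      then show "proxc X T (u i) (v i)" using H0 Prox_char[of "u i" "v i" X T] by simp
    qed
    have "\<exists>a b. \<forall>i\<in>{1..d}. dist (ipow X T (a + int i * b) (u i)) (ipow X T (a + int i * b) (v i)) < e"
      if e0: "e > 0" for e
    proof -
      obtain a where "\<forall>i\<in>{1..d}. dist (ipow X T a (u i)) (ipow X T a (v i)) < e"
        using multi[OF assms(1,3,4,5) cl H e0] by blast
      then show ?thesis by (intro exI[of _ a] exI[of _ 0]) simp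
    qed
    then show "z \<in> {(u, v). u \<in> Nd d X T \<and> v \<in> Nd d X T \<and>
     (\<forall>e>0. \<exists>a b. \<forall>i\<in>{1..d}. dist (ipow X T (a + int i * b) (u i)) (ipow X T (a + int i * b) (v i)) < e)}"
      using z by blast
  qed
qed

end
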